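(* Let $M_n$ be the operator below, and let $N\times K$ matrix functions $\varphi,\psi$ satisfy $$M_n\{\varphi\}=\varphi\Lambda,\qquad M_n^{\tau}\{\psi\}=\psi\tilde\Lambda,$$ where $\Lambda,\tilde\Lambda$ are constant $K\times K$ matrices. Let $C$ be a constant nondegenerate $K\times K$ matrix, and put $$\Delta=C+D^{-1}\{\psi^{\top}\varphi\},\qquad W=I-\varphi\Delta^{-1}D^{-1}\psi^{\top},\qquad \hat M_n:=WM_nW^{-1}.$$ Then $$\Phi:=\varphi\Delta^{-1}=W\{\varphi\}C^{-1},\qquad \Psi:=\psi(\Delta^{-1})^{\top}=(W^{-1})^{\tau}\{\psi\}(C^{\top})^{-1},$$ and these functions satisfy $$\hat M_n\{\Phi\}=\Phi\,C\Lambda C^{-1},\qquad \hat M_n^{\tau}\{\Psi\}=\Psi\,C^{\top}\tilde\Lambda (C^{\top})^{-1}.$$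
   Context: $D=\partial/\partial x$. Operators are formal matrix pseudodifferential operators in $D$ whose coefficients are $N\times N$ matrix functions of $x$ and $t_n$; they may also contain the derivation $\partial_{t_n}$, which commutes with $D$. $P\{f\}$ denotes the action of $P$ on $f$, with $D^{-1}$ a fixed $x$-antiderivative that commutes with $\partial_{t_n}$. The formal transpose $P^\tau$ is the anti-automorphism with $(fD^i)^\tau=(-1)^iD^if^\top$, $\partial_{t_n}^\tau=-\partial_{t_n}$, $(PQ)^\tau=Q^\tau P^\tau$. The operator is $$M_n=\alpha_n\partial_{t_n}-\tilde{\mathcal J}_nD^n-\sum_{i=0}^{n-1}v_iD^i-\gamma\mathbf q\mathcal M_0D^{-1}\mathbf r^\top,$$ where $\alpha_n,\gamma\in\mathbb C$, $\tilde{\mathcal J}_n$ is a constant $N\times N$ matrix, the $v_i$ are $N\times N$ matrix functions, $\mathbf q,\mathbf r$ are $N\times m$ matrix functions, and $\mathcal M_0$ is a constant $m\times m$ matrix. The inverse of $W$ is $W^{-1}=I+\varphi D^{-1}\Delta^{-1}\psi^\top$. *)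

theory Defs
  imports "HOL-Analysis.Analysis" "Jordan_Normal_Form.Gauss_Jordan_Elimination"
          "Jordan_Normal_Form.Determinant"
begin

text \<open>Matrix functions of the two real variables x (first argument) and t = t_n (second).\<close>
type_synonym mfun = "real \<Rightarrow> real \<Rightarrow> complex mat"

definition pdx :: "(real \<times> real \<Rightarrow> complex) \<Rightarrow> real \<times> real \<Rightarrow> complex" where
  "pdx f = (\<lambda>(x,t). vector_derivative (\<lambda>y. f (y,t)) (at x))"
definition pdt :: "(real \<times> real \<Rightarrow> complex) \<Rightarrow> real \<times> real \<Rightarrow> complex" where
  "pdt f = (\<lambda>(x,t). vector_derivative (\<lambda>s. f (x,s)) (at t))"

fun iter_pd :: "bool list \<Rightarrow> (real \<times> real \<Rightarrow> complex) \<Rightarrow> real \<times> real \<Rightarrow> complex" where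
  "iter_pd [] f = f"
| "iter_pd (b # bs) f = (if b then pdx else pdt) (iter_pd bs f)"

definition smooth2 :: "(real \<times> real \<Rightarrow> complex) \<Rightarrow> bool" where
  "smooth2 f \<longleftrightarrow> (\<forall>ws. continuous_on UNIV (iter_pd ws f) \<and>
      (\<forall>x t. (\<lambda>y. iter_pd ws f (y,t)) differentiable (at x)
          \<and> (\<lambda>s. iter_pd ws f (x,s)) differentiable (at t)))"

definition smooth_mfun :: "mfun \<Rightarrow> bool" where
  "smooth_mfun F \<longleftrightarrow> (\<forall>i j. smooth2 (\<lambda>(x,t). F x t $$ (i,j)))"

definition has_dims :: "mfun \<Rightarrow> nat \<Rightarrow> nat \<Rightarrow> bool" where
  "has_dims F r c \<longleftrightarrow> (\<forall>x t. F x t \<in> carrier_mat r c)"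

definition cst :: "complex mat \<Rightarrow> mfun" where "cst A = (\<lambda>x t. A)"
definition mmul :: "mfun \<Rightarrow> mfun \<Rightarrow> mfun" where "mmul F G = (\<lambda>x t. F x t * G x t)"
definition mtr :: "mfun \<Rightarrow> mfun" where "mtr F = (\<lambda>x t. transpose_mat (F x t))"
definition minv :: "complex mat \<Rightarrow> complex mat" where "minv A = the (mat_inverse A)"
definition finv :: "mfun \<Rightarrow> mfun" where "finv F = (\<lambda>x t. minv (F x t))"

definition dX :: "mfun \<Rightarrow> mfun" where
  "dX F = (\<lambda>x t. mat (dim_row (F x t)) (dim_col (F x t))
              (\<lambda>(i,j). vector_derivative (\<lambda>y. F y t $$ (i,j)) (at x)))"
definition dT :: "mfun \<Rightarrow> mfun" where
  "dT F = (\<lambda>x t. mat (dim_row (F x t)) (dim_col (F x t))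
              (\<lambda>(i,j). vector_derivative (\<lambda>s. F x s $$ (i,j)) (at t)))"

definition oint :: "real \<Rightarrow> real \<Rightarrow> (real \<Rightarrow> complex) \<Rightarrow> complex" where
  "oint a b f = (if a \<le> b then integral {a..b} f else - integral {b..a} f)"

text \<open>The fixed x-antiderivative D^{-1}: integration from a fixed base point x0.\<close>
definition dInv :: "real \<Rightarrow> mfun \<Rightarrow> mfun" where
  "dInv x0 F = (\<lambda>x t. mat (dim_row (F x t)) (dim_col (F x t))
              (\<lambda>(i,j). oint x0 x (\<lambda>s. F s t $$ (i,j))))"

datatype opr = Mul mfun | OD | ODinv | ODt | Scal complex | Comp opr opr | Plus opr opr

fun act :: "real \<Rightarrow> opr \<Rightarrow> mfun \<Rightarrow> mfun" where
  "act x0 (Mul f) g = mmul f g"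
| "act x0 OD g = dX g"
| "act x0 ODinv g = dInv x0 g"
| "act x0 ODt g = dT g"
| "act x0 (Scal c) g = (\<lambda>x t. c \<cdot>\<^sub>m g x t)"
| "act x0 (Comp P Q) g = act x0 P (act x0 Q g)"
| "act x0 (Plus P Q) g = (\<lambda>x t. act x0 P g x t + act x0 Q g x t)"

fun otr :: "opr \<Rightarrow> opr" where
  "otr (Mul f) = Mul (mtr f)"
| "otr OD = Comp (Scal (-1)) OD"
| "otr ODinv = Comp (Scal (-1)) ODinv"
| "otr ODt = Comp (Scal (-1)) ODt"
| "otr (Scal c) = Scal c"
| "otr (Comp P Q) = Comp (otr Q) (otr P)"
| "otr (Plus P Q) = Plus (otr P) (otr Q)"

fun Dpow :: "nat \<Rightarrow> opr" where
  "Dpow 0 = Scal 1"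
| "Dpow (Suc k) = Comp OD (Dpow k)"

text \<open>M_n = \<alpha> \<partial>_t - J D^n - \<Sum>_{i<n} v_i D^i - \<gamma> q M0 D^{-1} r^T.\<close>
definition Mop :: "nat \<Rightarrow> complex \<Rightarrow> complex mat \<Rightarrow> (nat \<Rightarrow> mfun) \<Rightarrow> complex
    \<Rightarrow> mfun \<Rightarrow> complex mat \<Rightarrow> mfun \<Rightarrow> opr" where
  "Mop n \<alpha> J v \<gamma> q M0 r =
     Plus (Comp (Scal \<alpha>) ODt)
    (Plus (Comp (Scal (-1)) (Comp (Mul (cst J)) (Dpow n)))
    (Plus (Comp (Scal (-1)) (foldr (\<lambda>i P. Plus (Comp (Mul (v i)) (Dpow i)) P) [0..<n] (Scal 0)))
          (Comp (Scal (- \<gamma>)) (Comp (Mul (mmul q (cst M0))) (Comp ODinv (Mul (mtr r)))))))"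

end

theory Submission
  imports Defs
begin

definition P2 :: "(real \<times> real \<Rightarrow> complex) \<Rightarrow> bool" where
  "P2 h \<longleftrightarrow> continuous_on UNIV h \<and> (\<forall>x t. (\<lambda>y. h (y,t)) differentiable (at x)
          \<and> (\<lambda>s. h (x,s)) differentiable (at t))"

lemma smooth2_iff: "smooth2 f \<longleftrightarrow> (\<forall>ws. P2 (iter_pd ws f))"
  by (simp add: smooth2_def P2_def)

lemma iter_pd_append: "iter_pd (ws @ [b]) f = iter_pd ws ((if b then pdx else pdt) f)"
  by (induct ws) auto

lemma smooth2_P2: "smooth2 f \<Longrightarrow> P2 f"
  using smooth2_iff[of f] iter_pd.simps(1) by metis

lemma smooth2_pd: "smooth2 f \<Longrightarrow> smooth2 ((if b then pdx else pdt) f)"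
  unfolding smooth2_iff by (metis iter_pd_append)

lemma smooth2_pdx: "smooth2 f \<Longrightarrow> smooth2 (pdx f)"
  using smooth2_pd[of f True] by simp
lemma smooth2_pdt: "smooth2 f \<Longrightarrow> smooth2 (pdt f)"
  using smooth2_pd[of f False] by simp

lemma P2_add: "P2 f \<Longrightarrow> P2 g \<Longrightarrow> P2 (\<lambda>z. f z + g z)"
  unfolding P2_def by (auto intro!: continuous_intros)

lemma P2_mult: "P2 f \<Longrightarrow> P2 g \<Longrightarrow> P2 (\<lambda>z. f z * g z)"
  unfolding P2_def by (auto intro!: continuous_intros)

lemma P2_const: "P2 (\<lambda>z. c)"
  unfolding P2_def by auto

lemma pd_add:
  assumes "P2 f" "P2 g"
  shows "(if b then pdx else pdt) (\<lambda>z. f z + g z)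
       = (\<lambda>z. (if b then pdx else pdt) f z + (if b then pdx else pdt) g z)"
proof (rule ext, clarify)
  fix x t
  show "(if b then pdx else pdt) (\<lambda>z. f z + g z) (x,t)
       = (if b then pdx else pdt) f (x,t) + (if b then pdx else pdt) g (x,t)"
  proof (cases b)
    case True
    have f: "(\<lambda>y. f (y,t)) differentiable (at x)" and g: "(\<lambda>y. g (y,t)) differentiable (at x)"
      using assms unfolding P2_def by auto
    have "((\<lambda>y. f (y,t) + g (y,t)) has_vector_derivative
       vector_derivative (\<lambda>y. f (y,t)) (at x) + vector_derivative (\<lambda>y. g (y,t)) (at x)) (at x)"
      using f g by (intro has_vector_derivative_add) (auto simp: vector_derivative_works[symmetric])
    then show ?thesis using True by (simp add: pdx_def vector_derivative_at)
  next
    case False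
    have f: "(\<lambda>s. f (x,s)) differentiable (at t)" and g: "(\<lambda>s. g (x,s)) differentiable (at t)"
      using assms unfolding P2_def by auto
    have "((\<lambda>s. f (x,s) + g (x,s)) has_vector_derivative
       vector_derivative (\<lambda>s. f (x,s)) (at t) + vector_derivative (\<lambda>s. g (x,s)) (at t)) (at t)"
      using f g by (intro has_vector_derivative_add) (auto simp: vector_derivative_works[symmetric])
    then show ?thesis using False by (simp add: pdt_def vector_derivative_at)
  qed
qed

lemma pd_mult:
  assumes "P2 f" "P2 g"
  shows "(if b then pdx else pdt) (\<lambda>z. f z * g z)
       = (\<lambda>z. (if b then pdx else pdt) f z * g z + f z * (if b then pdx else pdt) g z)"
proof (rule ext, clarify)
  fix x t
  show "(if b then pdx else pdt) (\<lambda>z. f z * g z) (x,t)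
       = (if b then pdx else pdt) f (x,t) * g (x,t) + f (x,t) * (if b then pdx else pdt) g (x,t)"
  proof (cases b)
    case True
    have f: "(\<lambda>y. f (y,t)) differentiable (at x)" and g: "(\<lambda>y. g (y,t)) differentiable (at x)"
      using assms unfolding P2_def by auto
    have "((\<lambda>y. f (y,t) * g (y,t)) has_vector_derivative
       f (x,t) * vector_derivative (\<lambda>y. g (y,t)) (at x) + vector_derivative (\<lambda>y. f (y,t)) (at x) * g (x,t)) (at x)"
      using f g by (intro has_vector_derivative_mult) (auto simp: vector_derivative_works[symmetric])
    then show ?thesis using True by (simp add: pdx_def vector_derivative_at algebra_simps)
  next
    case False
    have f: "(\<lambda>s. f (x,s)) differentiable (at t)" and g: "(\<lambda>s. g (x,s)) differentiable (at t)"
      using assms unfolding P2_def by auto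
    have "((\<lambda>s. f (x,s) * g (x,s)) has_vector_derivative
       f (x,t) * vector_derivative (\<lambda>s. g (x,s)) (at t) + vector_derivative (\<lambda>s. f (x,s)) (at t) * g (x,t)) (at t)"
      using f g by (intro has_vector_derivative_mult) (auto simp: vector_derivative_works[symmetric])
    then show ?thesis using False by (simp add: pdt_def vector_derivative_at algebra_simps)
  qed
qed

lemma iter_pd_add:
  assumes "\<forall>u. length u < length ws \<longrightarrow> P2 (iter_pd u f) \<and> P2 (iter_pd u g)"
  shows "iter_pd ws (\<lambda>z. f z + g z) = (\<lambda>z. iter_pd ws f z + iter_pd ws g z)"
  using assms
proof (induct ws)
  case Nil then show ?case by simp
next
  case (Cons b ws)
  have IH: "iter_pd ws (\<lambda>z. f z + g z) = (\<lambda>z. iter_pd ws f z + iter_pd ws g z)"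
    using Cons by auto
  have "P2 (iter_pd ws f)" "P2 (iter_pd ws g)" using Cons.prems by auto
  then show ?case using IH pd_add[of "iter_pd ws f" "iter_pd ws g" b] by simp
qed

lemma smooth2_add: "smooth2 f \<Longrightarrow> smooth2 g \<Longrightarrow> smooth2 (\<lambda>z. f z + g z)"
  unfolding smooth2_iff
  by (subst iter_pd_add) (auto intro: P2_add)

lemma iter_pd_const: "\<exists>c'. iter_pd ws (\<lambda>z. c) = (\<lambda>z. c')"
proof (induct ws)
  case Nil then show ?case by auto
next
  case (Cons b ws)
  then obtain c' where e: "iter_pd ws (\<lambda>z. c) = (\<lambda>z. c')" by auto
  show ?case using e by (auto simp: pdx_def pdt_def)
qed

lemma smooth2_const: "smooth2 (\<lambda>z. c)"
  unfolding smooth2_iff using iter_pd_const P2_const by metis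

lemma smooth2_mult_aux:
  "\<forall>f g. smooth2 f \<longrightarrow> smooth2 g \<longrightarrow> (\<forall>ws. length ws \<le> n \<longrightarrow> P2 (iter_pd ws (\<lambda>z. f z * g z)))"
proof (induct n)
  case 0
  then show ?case by (auto intro: P2_mult smooth2_P2)
next
  case (Suc n)
  show ?case
  proof (intro allI impI)
    fix f g and ws :: "bool list"
    assume f: "smooth2 f" and g: "smooth2 g" and l: "length ws \<le> Suc n"
    show "P2 (iter_pd ws (\<lambda>z. f z * g z))"
    proof (cases "length ws \<le> n")
      case True then show ?thesis using Suc f g by blast
    next
      case False
      then have "ws \<noteq> []" by auto
      then obtain ws' b where ws: "ws = ws' @ [b]" by (metis rev_exhaust)
      with l False have lw: "length ws' = n" by auto
      let ?d = "if b then pdx else pdt"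
      have sf: "smooth2 (?d f)" and sg: "smooth2 (?d g)" using f g smooth2_pd by auto
      have "iter_pd ws (\<lambda>z. f z * g z) = iter_pd ws' (?d (\<lambda>z. f z * g z))"
        using ws iter_pd_append by simp
      also have "\<dots> = iter_pd ws' (\<lambda>z. ?d f z * g z + f z * ?d g z)"
        using pd_mult[OF smooth2_P2[OF f] smooth2_P2[OF g]] by simp
      also have "\<dots> = (\<lambda>z. iter_pd ws' (\<lambda>z. ?d f z * g z) z + iter_pd ws' (\<lambda>z. f z * ?d g z) z)"
        using Suc sf sg f g lw by (intro iter_pd_add) auto
      finally show ?thesis using Suc sf sg f g lw by (auto intro!: P2_add)
    qed
  qed
qed

lemma smooth2_mult: "smooth2 f \<Longrightarrow> smooth2 g \<Longrightarrow> smooth2 (\<lambda>z. f z * g z)"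
  using smooth2_mult_aux unfolding smooth2_iff by blast

lemma smooth2_sum: "finite S \<Longrightarrow> (\<And>k. k \<in> S \<Longrightarrow> smooth2 (f k)) \<Longrightarrow> smooth2 (\<lambda>z. \<Sum>k\<in>S. f k z)"
proof (induct S rule: finite_induct)
  case empty then show ?case using smooth2_const[of 0] by simp
next
  case (insert a S) then show ?case using smooth2_add[of "f a" "\<lambda>z. \<Sum>k\<in>S. f k z"] by simp
qed


definition ent :: "mfun \<Rightarrow> nat \<Rightarrow> nat \<Rightarrow> real \<times> real \<Rightarrow> complex" where
  "ent F i j = (\<lambda>(x,t). F x t $$ (i,j))"

definition sm :: "nat \<Rightarrow> nat \<Rightarrow> mfun \<Rightarrow> bool" where
  "sm r c F \<longleftrightarrow> has_dims F r c \<and> (\<forall>i<r. \<forall>j<c. smooth2 (ent F i j))"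

lemma ent_eqI: "(\<And>x t. F x t $$ (i,j) = g (x,t)) \<Longrightarrow> ent F i j = g"
  unfolding ent_def by auto

lemma mult_ent: "A \<in> carrier_mat r c \<Longrightarrow> B \<in> carrier_mat c d \<Longrightarrow> i < r \<Longrightarrow> j < d \<Longrightarrow>
  (A * B) $$ (i,j) = (\<Sum>k<c. A $$ (i,k) * B $$ (k,j))"
  by (auto simp: scalar_prod_def atLeast0LessThan intro!: sum.cong)

lemma has_dims_mmul: "has_dims F r c \<Longrightarrow> has_dims G c d \<Longrightarrow> has_dims (mmul F G) r d"
  unfolding has_dims_def mmul_def by (meson mult_carrier_mat)

lemma has_dims_cst: "A \<in> carrier_mat r c \<Longrightarrow> has_dims (cst A) r c"
  unfolding has_dims_def cst_def by auto

lemma has_dims_mtr: "has_dims F r c \<Longrightarrow> has_dims (mtr F) c r"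
  unfolding has_dims_def mtr_def by auto

lemma sm_dims: "sm r c F \<Longrightarrow> has_dims F r c" unfolding sm_def by auto

lemma hd_row: "has_dims F r c \<Longrightarrow> dim_row (F x t) = r" unfolding has_dims_def by auto
lemma hd_col: "has_dims F r c \<Longrightarrow> dim_col (F x t) = c" unfolding has_dims_def by auto

lemma sm_mmul: assumes "sm r c F" "sm c d G" shows "sm r d (mmul F G)"
proof -
  have dF: "\<And>x t. F x t \<in> carrier_mat r c" and dG: "\<And>x t. G x t \<in> carrier_mat c d"
    using assms unfolding sm_def has_dims_def by auto
  have "smooth2 (ent (mmul F G) i j)" if "i < r" "j < d" for i j
  proof -
    have "ent (mmul F G) i j = (\<lambda>z. \<Sum>k\<in>{..<c}. ent F i k z * ent G k j z)"
      by (rule ent_eqI) (simp add: ent_def mmul_def mult_ent[OF dF dG that])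
    moreover have "smooth2 (\<lambda>z. \<Sum>k\<in>{..<c}. ent F i k z * ent G k j z)"
      using assms that by (intro smooth2_sum smooth2_mult) (auto simp: sm_def)
    ultimately show ?thesis by simp
  qed
  then show ?thesis using assms by (auto simp: sm_def intro: has_dims_mmul)
qed

lemma sm_cst: "A \<in> carrier_mat r c \<Longrightarrow> sm r c (cst A)"
  unfolding sm_def using has_dims_cst
proof (intro conjI allI impI)
  fix i j
  have "ent (cst A) i j = (\<lambda>z. A $$ (i,j))" by (rule ent_eqI) (simp add: cst_def)
  then show "smooth2 (ent (cst A) i j)" by (simp add: smooth2_const)
qed

lemma sm_mtr: "sm r c F \<Longrightarrow> sm c r (mtr F)"
  unfolding sm_def
proof (intro conjI allI impI)
  assume a: "has_dims F r c \<and> (\<forall>i<r. \<forall>j<c. smooth2 (ent F i j))"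
  then show "has_dims (mtr F) c r" by (simp add: has_dims_mtr)
  fix i j assume "i < c" "j < r"
  have dr: "\<And>x t. dim_row (F x t) = r" "\<And>x t. dim_col (F x t) = c"
    using a by (auto simp: has_dims_def)
  have "ent (mtr F) i j = ent F j i"
    by (rule ent_eqI) (simp add: ent_def mtr_def dr \<open>i<c\<close> \<open>j<r\<close>)
  then show "smooth2 (ent (mtr F) i j)" using a \<open>i<c\<close> \<open>j<r\<close> by simp
qed

lemma sm_smult: "sm r c F \<Longrightarrow> sm r c (\<lambda>x t. a \<cdot>\<^sub>m F x t)"
  unfolding sm_def
proof (intro conjI allI impI)
  assume a: "has_dims F r c \<and> (\<forall>i<r. \<forall>j<c. smooth2 (ent F i j))"
  then show "has_dims (\<lambda>x t. a \<cdot>\<^sub>m F x t) r c" by (simp add: has_dims_def)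
  fix i j assume "i < r" "j < c"
  have dr: "\<And>x t. dim_row (F x t) = r" "\<And>x t. dim_col (F x t) = c"
    using a by (auto simp: has_dims_def)
  have "ent (\<lambda>x t. a \<cdot>\<^sub>m F x t) i j = (\<lambda>z. a * ent F i j z)"
    by (rule ent_eqI) (simp add: ent_def dr \<open>i<r\<close> \<open>j<c\<close>)
  then show "smooth2 (ent (\<lambda>x t. a \<cdot>\<^sub>m F x t) i j)" using a \<open>i<r\<close> \<open>j<c\<close>
    by (simp add: smooth2_mult smooth2_const)
qed

lemma sm_add: "sm r c F \<Longrightarrow> sm r c G \<Longrightarrow> sm r c (\<lambda>x t. F x t + G x t)"
  unfolding sm_def
proof (intro conjI allI impI)
  assume a: "has_dims F r c \<and> (\<forall>i<r. \<forall>j<c. smooth2 (ent F i j))"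
    and b: "has_dims G r c \<and> (\<forall>i<r. \<forall>j<c. smooth2 (ent G i j))"
  then show "has_dims (\<lambda>x t. F x t + G x t) r c" by (auto simp: has_dims_def)
  fix i j assume "i < r" "j < c"
  have dr: "\<And>x t. dim_row (F x t) = r" "\<And>x t. dim_col (F x t) = c"
     "\<And>x t. dim_row (G x t) = r" "\<And>x t. dim_col (G x t) = c"
    using hd_row hd_col a b by metis+
  have "ent (\<lambda>x t. F x t + G x t) i j = (\<lambda>z. ent F i j z + ent G i j z)"
    by (rule ent_eqI) (simp add: ent_def dr \<open>i<r\<close> \<open>j<c\<close>)
  then show "smooth2 (ent (\<lambda>x t. F x t + G x t) i j)" using a b \<open>i<r\<close> \<open>j<c\<close>
    by (simp add: smooth2_add)
qed

lemma sm_dX: assumes "sm r c F" shows "sm r c (dX F)"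
  unfolding sm_def
proof (intro conjI allI impI)
  have dr: "\<And>x t. dim_row (F x t) = r" "\<And>x t. dim_col (F x t) = c"
    using assms hd_row hd_col sm_dims by metis+
  show "has_dims (dX F) r c" unfolding has_dims_def dX_def by (simp add: dr)
  fix i j assume "i < r" "j < c"
  have "ent (dX F) i j = pdx (ent F i j)"
    by (rule ent_eqI) (simp add: ent_def dX_def pdx_def dr \<open>i<r\<close> \<open>j<c\<close>)
  then show "smooth2 (ent (dX F) i j)" using assms \<open>i<r\<close> \<open>j<c\<close>
    by (simp add: smooth2_pdx sm_def)
qed

lemma sm_dT: assumes "sm r c F" shows "sm r c (dT F)"
  unfolding sm_def
proof (intro conjI allI impI)
  have dr: "\<And>x t. dim_row (F x t) = r" "\<And>x t. dim_col (F x t) = c"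
    using assms hd_row hd_col sm_dims by metis+
  show "has_dims (dT F) r c" unfolding has_dims_def dT_def by (simp add: dr)
  fix i j assume "i < r" "j < c"
  have "ent (dT F) i j = pdt (ent F i j)"
    by (rule ent_eqI) (simp add: ent_def dT_def pdt_def dr \<open>i<r\<close> \<open>j<c\<close>)
  then show "smooth2 (ent (dT F) i j)" using assms \<open>i<r\<close> \<open>j<c\<close>
    by (simp add: smooth2_pdt sm_def)
qed

lemma smooth_mfun_sm: "smooth_mfun F \<Longrightarrow> has_dims F r c \<Longrightarrow> sm r c F"
  unfolding smooth_mfun_def sm_def ent_def by auto

lemma sm_diff_x: assumes "sm r c F" "i < r" "j < c" shows "(\<lambda>y. F y t $$ (i,j)) differentiable (at x)"
proof -
  have "P2 (ent F i j)" using assms by (intro smooth2_P2) (simp add: sm_def)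
  then show ?thesis unfolding P2_def ent_def by simp
qed

lemma sm_diff_t: assumes "sm r c F" "i < r" "j < c" shows "(\<lambda>s. F x s $$ (i,j)) differentiable (at t)"
proof -
  have "P2 (ent F i j)" using assms by (intro smooth2_P2) (simp add: sm_def)
  then show ?thesis unfolding P2_def ent_def by simp
qed

lemma sm_cont_x: assumes "sm r c F" "i < r" "j < c" shows "continuous_on UNIV (\<lambda>y. F y t $$ (i,j))"
  unfolding continuous_on_eq_continuous_within
  by (intro ballI differentiable_imp_continuous_within sm_diff_x[OF assms])

lemma entop_rmul:
  fixes L :: "real \<Rightarrow> real \<Rightarrow> (real \<Rightarrow> real \<Rightarrow> complex) \<Rightarrow> complex"
  assumes Op: "\<And>G. Op G = (\<lambda>x t. mat (dim_row (G x t)) (dim_col (G x t)) (\<lambda>(i,j). L x t (\<lambda>y s. G y s $$ (i,j))))"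
    and dF: "has_dims F r c" and A: "A \<in> carrier_mat c d"
    and lin: "\<And>x t i j. i < r \<Longrightarrow> j < d \<Longrightarrow>
       L x t (\<lambda>y s. \<Sum>k<c. F y s $$ (i,k) * A $$ (k,j)) = (\<Sum>k<c. L x t (\<lambda>y s. F y s $$ (i,k)) * A $$ (k,j))"
  shows "Op (mmul F (cst A)) = mmul (Op F) (cst A)" "has_dims (Op F) r c"
proof -
  have dF': "\<And>x t. F x t \<in> carrier_mat r c" using dF by (auto simp: has_dims_def)
  show hO: "has_dims (Op F) r c" using dF' unfolding has_dims_def Op by (simp add: hd_row[OF dF] hd_col[OF dF])
  show "Op (mmul F (cst A)) = mmul (Op F) (cst A)"
  proof (intro ext eq_matI)
    fix x t i j assume ij: "i < dim_row (mmul (Op F) (cst A) x t)" "j < dim_col (mmul (Op F) (cst A) x t)"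
    then have i: "i < r" and j: "j < d" using dF' A by (auto simp: mmul_def cst_def Op hd_row[OF dF])
    have e: "(\<lambda>y s. mmul F (cst A) y s $$ (i,j)) = (\<lambda>y s. \<Sum>k<c. F y s $$ (i,k) * A $$ (k,j))"
      by (intro ext) (simp add: mmul_def cst_def mult_ent[OF dF' A i j])
    have "Op (mmul F (cst A)) x t $$ (i,j) = L x t (\<lambda>y s. mmul F (cst A) y s $$ (i,j))"
      using dF' A i j by (simp add: Op mmul_def cst_def hd_row[OF dF])
    also have "\<dots> = (\<Sum>k<c. L x t (\<lambda>y s. F y s $$ (i,k)) * A $$ (k,j))" using e lin i j by simp
    also have "\<dots> = mmul (Op F) (cst A) x t $$ (i,j)"
      unfolding mmul_def cst_def mult_ent[OF hO[unfolded has_dims_def, rule_format] A i j]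
      using i by (simp add: Op hd_row[OF dF] hd_col[OF dF])
    finally show "Op (mmul F (cst A)) x t $$ (i,j) = mmul (Op F) (cst A) x t $$ (i,j)" .
  qed (use dF' A in \<open>auto simp: Op mmul_def cst_def\<close>)
qed

lemma dX_rmul: assumes "sm r c F" "A \<in> carrier_mat c d"
  shows "dX (mmul F (cst A)) = mmul (dX F) (cst A)"
proof (rule entop_rmul[where L="\<lambda>x t g. vector_derivative (\<lambda>y. g y t) (at x)"])
  show "has_dims F r c" using assms sm_dims by auto
  fix x t i j assume "i < r" "j < d"
  have "((\<lambda>y. \<Sum>k<c. F y t $$ (i,k) * A $$ (k,j)) has_vector_derivative
     (\<Sum>k<c. vector_derivative (\<lambda>y. F y t $$ (i,k)) (at x) * A $$ (k,j))) (at x)"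
    using assms(1) \<open>i<r\<close>
    by (intro has_vector_derivative_sum has_vector_derivative_mult_left)
       (auto simp: vector_derivative_works[symmetric] intro: sm_diff_x)
  then show "vector_derivative (\<lambda>y. \<Sum>k<c. F y t $$ (i,k) * A $$ (k,j)) (at x) =
     (\<Sum>k<c. vector_derivative (\<lambda>y. F y t $$ (i,k)) (at x) * A $$ (k,j))"
    by (rule vector_derivative_at)
qed (use assms in \<open>auto simp: dX_def\<close>)

lemma dT_rmul: assumes "sm r c F" "A \<in> carrier_mat c d"
  shows "dT (mmul F (cst A)) = mmul (dT F) (cst A)"
proof (rule entop_rmul[where L="\<lambda>x t g. vector_derivative (\<lambda>s. g x s) (at t)"])
  show "has_dims F r c" using assms sm_dims by auto
  fix x t i j assume "i < r" "j < d"
  have "((\<lambda>s. \<Sum>k<c. F x s $$ (i,k) * A $$ (k,j)) has_vector_derivative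
     (\<Sum>k<c. vector_derivative (\<lambda>s. F x s $$ (i,k)) (at t) * A $$ (k,j))) (at t)"
    using assms(1) \<open>i<r\<close>
    by (intro has_vector_derivative_sum has_vector_derivative_mult_left)
       (auto simp: vector_derivative_works[symmetric] intro: sm_diff_t)
  then show "vector_derivative (\<lambda>s. \<Sum>k<c. F x s $$ (i,k) * A $$ (k,j)) (at t) =
     (\<Sum>k<c. vector_derivative (\<lambda>s. F x s $$ (i,k)) (at t) * A $$ (k,j))"
    by (rule vector_derivative_at)
qed (use assms in \<open>auto simp: dT_def\<close>)

lemma oint_sum_mult:
  fixes c :: nat
  assumes "\<And>k. k < c \<Longrightarrow> continuous_on UNIV (f k)"
  shows "oint a b (\<lambda>s. \<Sum>k<c. f k s * z k) = (\<Sum>k<c. oint a b (f k) * z k)"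
proof -
  have I: "integral {l..u} (\<lambda>s. \<Sum>k<c. f k s * z k) = (\<Sum>k<c. integral {l..u} (f k) * z k)" for l u
  proof -
    have "((\<lambda>s. \<Sum>k<c. f k s * z k) has_integral (\<Sum>k<c. integral {l..u} (f k) * z k)) {l..u}"
      by (rule has_integral_sum[where f="\<lambda>k s. f k s * z k" and i="\<lambda>k. integral {l..u} (f k) * z k"])
         (auto intro!: has_integral_mult_left integrable_integral integrable_continuous_real
           intro: continuous_on_subset assms)
    then show ?thesis by (rule integral_unique)
  qed
  show ?thesis unfolding oint_def by (auto simp: I sum_negf)
qed

lemma dInv_rmul: assumes "sm r c F" "A \<in> carrier_mat c d"
  shows "dInv x0 (mmul F (cst A)) = mmul (dInv x0 F) (cst A)"
proof (rule entop_rmul[where L="\<lambda>x t g. oint x0 x (\<lambda>s. g s t)"])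
  show "has_dims F r c" using assms sm_dims by auto
  fix x t i j assume "i < r" "j < d"
  show "oint x0 x (\<lambda>s. \<Sum>k<c. F s t $$ (i,k) * A $$ (k,j)) =
     (\<Sum>k<c. oint x0 x (\<lambda>s. F s t $$ (i,k)) * A $$ (k,j))"
    using assms(1) \<open>i<r\<close> by (intro oint_sum_mult) (auto intro: sm_cont_x)
qed (use assms in \<open>auto simp: dInv_def\<close>)


definition rlin :: "real \<Rightarrow> opr \<Rightarrow> mfun \<Rightarrow> nat \<Rightarrow> bool" where
  "rlin x0 P F c \<longleftrightarrow> (\<forall>A d. A \<in> carrier_mat c d \<longrightarrow>
       act x0 P (mmul F (cst A)) = mmul (act x0 P F) (cst A))"

definition pop :: "real \<Rightarrow> opr \<Rightarrow> nat \<Rightarrow> nat \<Rightarrow> bool" where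
  "pop x0 P r r' \<longleftrightarrow> (\<forall>F c. has_dims F r c \<longrightarrow> has_dims (act x0 P F) r' c \<and> rlin x0 P F c)"
definition dop :: "real \<Rightarrow> opr \<Rightarrow> nat \<Rightarrow> nat \<Rightarrow> bool" where
  "dop x0 P r r' \<longleftrightarrow> (\<forall>F c. sm r c F \<longrightarrow> sm r' c (act x0 P F) \<and> rlin x0 P F c)"
definition gop :: "real \<Rightarrow> opr \<Rightarrow> nat \<Rightarrow> nat \<Rightarrow> bool" where
  "gop x0 P r r' \<longleftrightarrow> (\<forall>F c. sm r c F \<longrightarrow> has_dims (act x0 P F) r' c \<and> rlin x0 P F c)"

lemma rlin_Comp: "rlin x0 Q F c \<Longrightarrow> rlin x0 P (act x0 Q F) c \<Longrightarrow> rlin x0 (Comp P Q) F c"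
  unfolding rlin_def by simp

lemma rlin_Plus:
  assumes "has_dims (act x0 P F) r' c" "has_dims (act x0 Q F) r' c" "rlin x0 P F c" "rlin x0 Q F c"
  shows "rlin x0 (Plus P Q) F c"
  unfolding rlin_def
proof (intro allI impI)
  fix A :: "complex mat" and d assume A: "A \<in> carrier_mat c d"
  have eP: "act x0 P (mmul F (cst A)) = mmul (act x0 P F) (cst A)"
    and eQ: "act x0 Q (mmul F (cst A)) = mmul (act x0 Q F) (cst A)"
    using assms(3,4) A unfolding rlin_def by auto
  have d1: "\<And>x t. act x0 P F x t \<in> carrier_mat r' c" "\<And>x t. act x0 Q F x t \<in> carrier_mat r' c"
    using assms(1,2) unfolding has_dims_def by auto
  show "act x0 (Plus P Q) (mmul F (cst A)) = mmul (act x0 (Plus P Q) F) (cst A)"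
    by (simp add: eP eQ) (auto intro!: ext simp: mmul_def cst_def add_mult_distrib_mat[OF d1 A])
qed

lemma rlin_Scal: assumes "has_dims F r c" shows "rlin x0 (Scal a) F c"
  unfolding rlin_def
proof (intro allI impI)
  fix A :: "complex mat" and d assume A: "A \<in> carrier_mat c d"
  show "act x0 (Scal a) (mmul F (cst A)) = mmul (act x0 (Scal a) F) (cst A)"
    using assms A unfolding has_dims_def
    by (auto intro!: ext simp: mmul_def cst_def mult_smult_assoc_mat[of _ r c _ d])
qed

lemma rlin_Mul: assumes "has_dims f r' r" "has_dims F r c" shows "rlin x0 (Mul f) F c"
  unfolding rlin_def
proof (intro allI impI)
  fix A :: "complex mat" and d assume A: "A \<in> carrier_mat c d"
  show "act x0 (Mul f) (mmul F (cst A)) = mmul (act x0 (Mul f) F) (cst A)"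
    using assms A unfolding has_dims_def
    by (auto intro!: ext simp: mmul_def cst_def assoc_mult_mat[of _ r' r _ c _ d])
qed

lemma has_dims_smult: "has_dims F r c \<Longrightarrow> has_dims (\<lambda>x t. a \<cdot>\<^sub>m F x t) r c"
  unfolding has_dims_def by auto
lemma has_dims_add: "has_dims F r c \<Longrightarrow> has_dims G r c \<Longrightarrow> has_dims (\<lambda>x t. F x t + G x t) r c"
  unfolding has_dims_def by auto

lemma pop_Mul: "has_dims f r' r \<Longrightarrow> pop x0 (Mul f) r r'"
  unfolding pop_def by (auto intro: rlin_Mul has_dims_mmul)
lemma pop_Scal: "pop x0 (Scal a) r r"
  unfolding pop_def by (auto intro: rlin_Scal has_dims_smult)
lemma pop_Comp: "pop x0 Q r r' \<Longrightarrow> pop x0 P r' r'' \<Longrightarrow> pop x0 (Comp P Q) r r''"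
  unfolding pop_def by (auto intro: rlin_Comp)
lemma pop_Plus: "pop x0 P r r' \<Longrightarrow> pop x0 Q r r' \<Longrightarrow> pop x0 (Plus P Q) r r'"
  unfolding pop_def by (auto intro: rlin_Plus[where r'=r'] has_dims_add)

lemma dop_Mul: "sm r' r f \<Longrightarrow> dop x0 (Mul f) r r'"
  unfolding dop_def by (auto intro: rlin_Mul sm_mmul sm_dims)
lemma dop_Scal: "dop x0 (Scal a) r r"
  unfolding dop_def by (auto intro: rlin_Scal sm_smult sm_dims)
lemma dop_OD: "dop x0 OD r r"
  unfolding dop_def rlin_def by (auto intro: sm_dX dX_rmul)
lemma dop_ODt: "dop x0 ODt r r"
  unfolding dop_def rlin_def by (auto intro: sm_dT dT_rmul)
lemma dop_Comp: "dop x0 Q r r' \<Longrightarrow> dop x0 P r' r'' \<Longrightarrow> dop x0 (Comp P Q) r r''"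
  unfolding dop_def by (auto intro: rlin_Comp)
lemma dop_Plus: "dop x0 P r r' \<Longrightarrow> dop x0 Q r r' \<Longrightarrow> dop x0 (Plus P Q) r r'"
  unfolding dop_def
proof (intro allI impI conjI)
  fix F c assume a: "\<forall>F c. sm r c F \<longrightarrow> sm r' c (act x0 P F) \<and> rlin x0 P F c"
    "\<forall>F c. sm r c F \<longrightarrow> sm r' c (act x0 Q F) \<and> rlin x0 Q F c" and F: "sm r c F"
  then have s: "sm r' c (act x0 P F)" "sm r' c (act x0 Q F)" "rlin x0 P F c" "rlin x0 Q F c" by auto
  then show "sm r' c (act x0 (Plus P Q) F)" by (simp add: sm_add)
  show "rlin x0 (Plus P Q) F c" using s by (intro rlin_Plus[where r'=r'] sm_dims)
qed

lemma gop_dop: "dop x0 P r r' \<Longrightarrow> gop x0 P r r'"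
  unfolding dop_def gop_def by (auto intro: sm_dims)
lemma gop_Comp_dop: "dop x0 Q r r' \<Longrightarrow> gop x0 P r' r'' \<Longrightarrow> gop x0 (Comp P Q) r r''"
  unfolding dop_def gop_def by (auto intro: rlin_Comp)
lemma gop_Comp_pop: "gop x0 Q r r' \<Longrightarrow> pop x0 P r' r'' \<Longrightarrow> gop x0 (Comp P Q) r r''"
  unfolding pop_def gop_def by (auto intro: rlin_Comp)
lemma gop_Plus: "gop x0 P r r' \<Longrightarrow> gop x0 Q r r' \<Longrightarrow> gop x0 (Plus P Q) r r'"
  unfolding gop_def by (auto intro: rlin_Plus[where r'=r'] has_dims_add)
lemma gop_ODinv: "gop x0 ODinv r r"
  unfolding gop_def rlin_def
proof (intro allI impI conjI)
  fix F c assume F: "sm r c F"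
  have dr: "\<And>x t. dim_row (F x t) = r" "\<And>x t. dim_col (F x t) = c"
    using F hd_row hd_col sm_dims by metis+
  show "has_dims (act x0 ODinv F) r c" unfolding has_dims_def by (simp add: dInv_def dr)
  fix A :: "complex mat" and d assume "A \<in> carrier_mat c d"
  then show "act x0 ODinv (mmul F (cst A)) = mmul (act x0 ODinv F) (cst A)"
    using F by (simp add: dInv_rmul)
qed

lemma dop_Dpow: "dop x0 (Dpow k) r r"
  by (induct k) (auto intro: dop_Comp dop_OD dop_Scal)

lemma dop_otr_Dpow: "dop x0 (otr (Dpow k)) r r"
  by (induct k) (auto intro: dop_Comp dop_OD dop_Scal)


lemma dop_foldr: "(\<forall>i\<in>set xs. sm N N (v i)) \<Longrightarrow>
   dop x0 (foldr (\<lambda>i P. Plus (Comp (Mul (v i)) (Dpow i)) P) xs (Scal 0)) N N"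
  by (induct xs) (auto intro!: dop_Plus dop_Comp dop_Mul dop_Dpow dop_Scal)

lemma dop_otr_foldr: "(\<forall>i\<in>set xs. sm N N (v i)) \<Longrightarrow>
   dop x0 (otr (foldr (\<lambda>i P. Plus (Comp (Mul (v i)) (Dpow i)) P) xs (Scal 0))) N N"
  by (induct xs) (auto intro!: dop_Plus dop_Comp dop_Mul dop_otr_Dpow dop_Scal sm_mtr)

lemma gop_M:
  assumes J: "J \<in> carrier_mat N N" and M0: "M0 \<in> carrier_mat m m"
    and v: "\<And>i. i < n \<Longrightarrow> sm N N (v i)" and q: "sm N m q" and r: "sm N m r"
  shows "gop x0 (Mop n \<alpha> J v \<gamma> q M0 r) N N"
proof -
  have t1: "gop x0 (Comp (Scal \<alpha>) ODt) N N" by (rule gop_dop[OF dop_Comp[OF dop_ODt dop_Scal]])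
  have t2: "gop x0 (Comp (Scal (-1)) (Comp (Mul (cst J)) (Dpow n))) N N"
    by (rule gop_dop[OF dop_Comp[OF dop_Comp[OF dop_Dpow dop_Mul[OF sm_cst[OF J]]] dop_Scal]])
  have t3: "gop x0 (Comp (Scal (-1)) (foldr (\<lambda>i P. Plus (Comp (Mul (v i)) (Dpow i)) P) [0..<n] (Scal 0))) N N"
    by (rule gop_dop[OF dop_Comp[OF dop_foldr dop_Scal]]) (use v in auto)
  have qM: "has_dims (mmul q (cst M0)) N m" using q M0 by (intro has_dims_mmul sm_dims has_dims_cst)
  have t4: "gop x0 (Comp (Scal (- \<gamma>)) (Comp (Mul (mmul q (cst M0))) (Comp ODinv (Mul (mtr r))))) N N"
    by (rule gop_Comp_pop[OF gop_Comp_pop[OF gop_Comp_dop[OF dop_Mul[OF sm_mtr[OF r]] gop_ODinv] pop_Mul[OF qM]] pop_Scal])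
  show ?thesis unfolding Mop_def by (intro gop_Plus t1 t2 t3 t4)
qed

lemma gop_otr_M:
  assumes J: "J \<in> carrier_mat N N" and M0: "M0 \<in> carrier_mat m m"
    and v: "\<And>i. i < n \<Longrightarrow> sm N N (v i)" and q: "sm N m q" and r: "sm N m r"
  shows "gop x0 (otr (Mop n \<alpha> J v \<gamma> q M0 r)) N N"
proof -
  have t1: "gop x0 (otr (Comp (Scal \<alpha>) ODt)) N N" by (auto intro!: gop_dop dop_Comp dop_Scal dop_ODt)
  have t2: "gop x0 (otr (Comp (Scal (-1)) (Comp (Mul (cst J)) (Dpow n)))) N N"
    using J by (auto intro!: gop_dop dop_Comp dop_Scal dop_otr_Dpow dop_Mul sm_cst sm_mtr)
  have t3: "gop x0 (otr (Comp (Scal (-1)) (foldr (\<lambda>i P. Plus (Comp (Mul (v i)) (Dpow i)) P) [0..<n] (Scal 0)))) N N"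
    using v by (auto intro!: gop_dop dop_Comp dop_Scal dop_otr_foldr)
  have qM: "sm m N (mtr (mmul q (cst M0)))" using q M0 by (intro sm_mtr sm_mmul sm_cst)
  have rr: "has_dims (mtr (mtr r)) N m" using r by (intro has_dims_mtr sm_dims sm_mtr)
  have t4: "gop x0 (otr (Comp (Scal (- \<gamma>)) (Comp (Mul (mmul q (cst M0))) (Comp ODinv (Mul (mtr r)))))) N N"
    by (simp, rule gop_Comp_dop[OF dop_Scal gop_Comp_dop[OF dop_Mul[OF qM]
          gop_Comp_pop[OF gop_Comp_pop[OF gop_ODinv pop_Scal] pop_Mul[OF rr]]]])
  show ?thesis unfolding Mop_def otr.simps(7) by (intro gop_Plus t1 t2 t3 t4)
qed

lemma gop_W:
  assumes "has_dims P N K" "sm N K \<psi>"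
  shows "gop x0 (Plus (Scal 1) (Comp (Scal (-1)) (Comp (Mul P) (Comp ODinv (Mul (mtr \<psi>)))))) N N"
  by (rule gop_Plus[OF gop_dop[OF dop_Scal] gop_Comp_pop[OF gop_Comp_pop[OF
        gop_Comp_dop[OF dop_Mul[OF sm_mtr[OF assms(2)]] gop_ODinv] pop_Mul[OF assms(1)]] pop_Scal]])

lemma gop_otr_Winv:
  assumes "sm N K \<phi>" "has_dims \<psi> N K" "has_dims B K K"
  shows "gop x0 (otr (Plus (Scal 1) (Comp (Mul \<phi>) (Comp ODinv (Comp (Mul B) (Mul (mtr \<psi>))))))) N N"
proof -
  have a: "has_dims (mtr B) K K" "has_dims (mtr (mtr \<psi>)) N K" using assms by (auto intro: has_dims_mtr)
  show ?thesis
    by (simp, rule gop_Plus[OF gop_dop[OF dop_Scal] gop_Comp_dop[OF dop_Mul[OF sm_mtr[OF assms(1)]]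
        gop_Comp_pop[OF gop_Comp_pop[OF gop_ODinv pop_Scal] pop_Comp[OF pop_Mul[OF a(1)] pop_Mul[OF a(2)]]]]])
qed


lemma oint_same[simp]: "oint a a f = 0"
  unfolding oint_def by simp

lemma oint_split:
  fixes g :: "real \<Rightarrow> complex"
  assumes g: "continuous_on UNIV g" and la: "l \<le> a" and ly: "l \<le> y"
  shows "oint a y g = integral {l..y} g - integral {l..a} g"
proof (cases "a \<le> y")
  case True
  have "integral {l..a} g + integral {a..y} g = integral {l..y} g"
    using True la by (intro Henstock_Kurzweil_Integration.integral_combine integrable_continuous_real continuous_on_subset[OF g]) auto
  then show ?thesis using True unfolding oint_def by (simp add: algebra_simps)
next
  case False
  have "integral {l..y} g + integral {y..a} g = integral {l..a} g"
    using False ly by (intro Henstock_Kurzweil_Integration.integral_combine integrable_continuous_real continuous_on_subset[OF g]) auto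
  then show ?thesis using False unfolding oint_def by (simp add: algebra_simps)
qed

lemma oint_deriv:
  fixes g :: "real \<Rightarrow> complex"
  assumes g: "continuous_on UNIV g"
  shows "((\<lambda>y. oint a y g) has_vector_derivative g x) (at x)"
proof -
  define l where "l = min a x - 1"
  define u where "u = max a x + 1"
  have lx: "l < x" "x < u" unfolding l_def u_def by auto
  have "((\<lambda>y. integral {l..y} g) has_vector_derivative g x) (at x within {l..u})"
    using lx by (intro integral_has_vector_derivative continuous_on_subset[OF g]) auto
  then have "((\<lambda>y. integral {l..y} g) has_vector_derivative g x) (at x)"
    using at_within_Icc_at[OF lx] by simp
  then have d: "((\<lambda>y. integral {l..y} g - integral {l..a} g) has_vector_derivative g x) (at x)"
    by (simp add: has_vector_derivative_diff_const)
  show ?thesis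
  proof (rule has_vector_derivative_transform_within_open[OF d, of "{l<..}"])
    fix y assume "y \<in> {l<..}"
    then show "integral {l..y} g - integral {l..a} g = oint a y g"
      by (subst oint_split[OF g]) (auto simp: l_def)
  qed (use lx in auto)
qed

lemma oint_ftc:
  fixes f f' :: "real \<Rightarrow> complex"
  assumes "\<And>y. (f has_vector_derivative f' y) (at y)"
  shows "oint a b f' = f b - f a"
proof (cases "a \<le> b")
  case True
  have "(f' has_integral (f b - f a)) {a..b}"
    using True assms by (intro fundamental_theorem_of_calculus) (auto intro: has_vector_derivative_at_within)
  then show ?thesis using True unfolding oint_def by (simp add: integral_unique)
next
  case False
  have "(f' has_integral (f a - f b)) {b..a}"
    using False assms by (intro fundamental_theorem_of_calculus) (auto intro: has_vector_derivative_at_within)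
  then show ?thesis using False unfolding oint_def by (simp add: integral_unique)
qed

lemma minv_props:
  assumes A: "A \<in> carrier_mat n n" and d: "det A \<noteq> 0"
  shows "minv A \<in> carrier_mat n n" "A * minv A = 1\<^sub>m n" "minv A * A = 1\<^sub>m n"
proof -
  have "mat_inverse A \<noteq> None"
    using mat_inverse(1)[OF A, of "()"] det_non_zero_imp_unit[OF A d, of "()"] by blast
  then obtain B where "mat_inverse A = Some B" by auto
  then have "A * B = 1\<^sub>m n \<and> B * A = 1\<^sub>m n \<and> B \<in> carrier_mat n n" using mat_inverse(2)[OF A] by auto
  moreover have "minv A = B" using \<open>mat_inverse A = Some B\<close> by (simp add: minv_def)
  ultimately show "minv A \<in> carrier_mat n n" "A * minv A = 1\<^sub>m n" "minv A * A = 1\<^sub>m n" by auto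
qed

lemma minv_adj:
  assumes A: "A \<in> carrier_mat n n" and d: "det A \<noteq> 0"
  shows "minv A = (1 / det A) \<cdot>\<^sub>m adj_mat A"
proof -
  note mp = minv_props[OF A d]
  have adj: "adj_mat A \<in> carrier_mat n n" "adj_mat A * A = det A \<cdot>\<^sub>m 1\<^sub>m n" using adj_mat[OF A] by auto
  have "(1 / det A) \<cdot>\<^sub>m adj_mat A = ((1 / det A) \<cdot>\<^sub>m adj_mat A) * (A * minv A)"
    using mp adj by simp
  also have "\<dots> = (((1 / det A) \<cdot>\<^sub>m adj_mat A) * A) * minv A"
    using mp adj A by (simp add: assoc_mult_mat[of _ n n _ n _ n])
  also have "((1 / det A) \<cdot>\<^sub>m adj_mat A) * A = 1\<^sub>m n"
  proof -
    have "((1 / det A) \<cdot>\<^sub>m adj_mat A) * A = (1 / det A) \<cdot>\<^sub>m (det A \<cdot>\<^sub>m 1\<^sub>m n)"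
      using adj A by (simp add: mult_smult_assoc_mat[of _ n n _ n])
    also have "\<dots> = 1\<^sub>m n" using d by (intro eq_matI) auto
    finally show ?thesis .
  qed
  finally show ?thesis using mp by simp
qed

lemma differentiable_prod_fin:
  fixes f :: "'i \<Rightarrow> real \<Rightarrow> complex"
  shows "finite S \<Longrightarrow> (\<And>i. i \<in> S \<Longrightarrow> f i differentiable (at x)) \<Longrightarrow> (\<lambda>y. \<Prod>i\<in>S. f i y) differentiable (at x)"
proof (induct S rule: finite_induct)
  case empty then show ?case by simp
next
  case (insert a S)
  then show ?case by (simp add: differentiable_mult)
qed

lemma det_differentiable:
  fixes Mf :: "real \<Rightarrow> complex mat"
  assumes car: "\<And>y. Mf y \<in> carrier_mat n n"
    and d: "\<And>i j. i < n \<Longrightarrow> j < n \<Longrightarrow> (\<lambda>y. Mf y $$ (i,j)) differentiable (at x)"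
  shows "(\<lambda>y. det (Mf y)) differentiable (at x)"
proof -
  have e: "(\<lambda>y. det (Mf y)) = (\<lambda>y. \<Sum>p \<in> {p. p permutes {0..<n}}. signof p * (\<Prod>i = 0..<n. Mf y $$ (i, p i)))"
    using det_def'[OF car] by auto
  have "(\<lambda>y. \<Sum>p \<in> {p. p permutes {0..<n}}. signof p * (\<Prod>i = 0..<n. Mf y $$ (i, p i))) differentiable (at x)"
  proof (intro differentiable_sum ballI differentiable_mult differentiable_const differentiable_prod_fin)
    show "finite {p. p permutes {0..<n}}" by (rule finite_permutations) simp
    fix p i assume p: "p \<in> {p. p permutes {0..<n}}" and i: "i \<in> {0..<n}"
    then have "p i < n" using permutes_in_image[of p "{0..<n}" i] by auto
    then show "(\<lambda>y. Mf y $$ (i, p i)) differentiable (at x)" using i d by auto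
  qed auto
  then show ?thesis using e by simp
qed

lemma minv_entry_differentiable:
  fixes Mf :: "real \<Rightarrow> complex mat"
  assumes car: "\<And>y. Mf y \<in> carrier_mat n n" and dt: "\<And>y. det (Mf y) \<noteq> 0"
    and d: "\<And>i j. i < n \<Longrightarrow> j < n \<Longrightarrow> (\<lambda>y. Mf y $$ (i,j)) differentiable (at x)"
    and ij: "i < n" "j < n"
  shows "(\<lambda>y. minv (Mf y) $$ (i,j)) differentiable (at x)"
proof -
  have e: "minv (Mf y) $$ (i,j) = (-1)^(j+i) * det (mat_delete (Mf y) j i) / det (Mf y)" for y
    using minv_adj[OF car dt] car[of y] ij by (simp add: adj_mat_def cofactor_def)
  have dd: "(\<lambda>y. det (mat_delete (Mf y) j i)) differentiable (at x)"
  proof (rule det_differentiable[where n="n-1"])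
    show "mat_delete (Mf y) j i \<in> carrier_mat (n-1) (n-1)" for y using car by (rule mat_delete_carrier)
    fix a b assume "a < n - 1" "b < n - 1"
    then have "(\<lambda>y. mat_delete (Mf y) j i $$ (a,b)) = (\<lambda>y. Mf y $$ (if a < j then a else Suc a, if b < i then b else Suc b))"
      using car by (auto simp: mat_delete_def carrier_matD(1,2)[OF car])
    moreover have "(if a < j then a else Suc a) < n" "(if b < i then b else Suc b) < n"
      using \<open>a < n - 1\<close> \<open>b < n - 1\<close> by auto
    ultimately show "(\<lambda>y. mat_delete (Mf y) j i $$ (a,b)) differentiable (at x)" using d by simp
  qed
  have "(\<lambda>y. (-1)^(j+i) * det (mat_delete (Mf y) j i) / det (Mf y)) differentiable (at x)"
    using dd det_differentiable[OF car d] dt by (intro differentiable_divide differentiable_mult) auto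
  then show ?thesis using e by simp
qed


lemma key:
  fixes G :: mfun and C :: "complex mat"
  assumes G: "sm K K G" and C: "C \<in> carrier_mat K K"
    and Dinv: "\<And>x t. det (C + dInv x0 G x t) \<noteq> 0"
  defines "\<Delta> \<equiv> (\<lambda>x t. C + dInv x0 G x t)"
  shows "dInv x0 (\<lambda>x t. finv \<Delta> x t * (G x t * finv \<Delta> x t)) = (\<lambda>x t. minv C - finv \<Delta> x t)"
proof (intro ext)
  fix x t
  define B where "B = (\<lambda>y. minv (\<Delta> y t))"
  have dG: "\<And>y. G y t \<in> carrier_mat K K" using G sm_dims unfolding has_dims_def by blast
  have dI: "\<And>y. dInv x0 G y t \<in> carrier_mat K K"
    using dG by (auto simp: dInv_def carrier_matD(1,2)[OF dG])
  have dD: "\<And>y. \<Delta> y t \<in> carrier_mat K K" unfolding \<Delta>_def using C dI by auto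
  have detD: "\<And>y. det (\<Delta> y t) \<noteq> 0" unfolding \<Delta>_def by (rule Dinv)
  note mp = minv_props[OF dD detD]
  have dB: "\<And>y. B y \<in> carrier_mat K K" unfolding B_def using mp by auto
  have DB: "\<And>y. \<Delta> y t * B y = 1\<^sub>m K" and BD: "\<And>y. B y * \<Delta> y t = 1\<^sub>m K" unfolding B_def using mp by auto
  have entD: "\<And>y i j. i < K \<Longrightarrow> j < K \<Longrightarrow> \<Delta> y t $$ (i,j) = C $$ (i,j) + oint x0 y (\<lambda>s. G s t $$ (i,j))"
    unfolding \<Delta>_def using C dG by (simp add: dInv_def carrier_matD(1,2)[OF dG])
  have hD: "((\<lambda>y. \<Delta> y t $$ (i,j)) has_vector_derivative G z t $$ (i,j)) (at z)" if ij: "i < K" "j < K" for i j z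
  proof -
    have "((\<lambda>y. C $$ (i,j) + oint x0 y (\<lambda>s. G s t $$ (i,j))) has_vector_derivative 0 + G z t $$ (i,j)) (at z)"
      by (intro has_vector_derivative_add has_vector_derivative_const oint_deriv sm_cont_x[OF G ij])
    then show ?thesis using entD[OF ij] by simp
  qed
  have Bdiff: "(\<lambda>y. B y $$ (i,j)) differentiable (at z)" if ij: "i < K" "j < K" for i j z
    unfolding B_def
    by (rule minv_entry_differentiable[OF dD detD _ ij]) (auto intro: differentiableI_vector[OF hD])
  define Bd where "Bd = (\<lambda>z. mat K K (\<lambda>(i,j). vector_derivative (\<lambda>y. B y $$ (i,j)) (at z)))"
  have dBd: "\<And>z. Bd z \<in> carrier_mat K K" unfolding Bd_def by auto
  have hB: "((\<lambda>y. B y $$ (i,j)) has_vector_derivative Bd z $$ (i,j)) (at z)" if ij: "i < K" "j < K" for i j z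
    using Bdiff[OF ij, of z] ij unfolding Bd_def by (simp add: vector_derivative_works[symmetric])
  have E0: "\<Delta> z t * Bd z + G z t * B z = 0\<^sub>m K K" for z
  proof (rule eq_matI)
    fix i j assume "i < dim_row (0\<^sub>m K K :: complex mat)" "j < dim_col (0\<^sub>m K K :: complex mat)"
    then have ij: "i < K" "j < K" by auto
    have hs: "((\<lambda>y. \<Sum>k<K. \<Delta> y t $$ (i,k) * B y $$ (k,j)) has_vector_derivative
          (\<Sum>k<K. \<Delta> z t $$ (i,k) * Bd z $$ (k,j) + G z t $$ (i,k) * B z $$ (k,j))) (at z)"
      using ij by (intro has_vector_derivative_sum has_vector_derivative_mult hD hB) auto
    have ef: "(\<lambda>y. \<Sum>k<K. \<Delta> y t $$ (i,k) * B y $$ (k,j)) = (\<lambda>y. 1\<^sub>m K $$ (i,j))"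
    proof
      fix y show "(\<Sum>k<K. \<Delta> y t $$ (i,k) * B y $$ (k,j)) = 1\<^sub>m K $$ (i,j)"
        using mult_ent[OF dD[of y] dB[of y] ij] DB[of y] by simp
    qed
    have "(\<Sum>k<K. \<Delta> z t $$ (i,k) * Bd z $$ (k,j) + G z t $$ (i,k) * B z $$ (k,j)) = 0"
      by (rule vector_derivative_unique_at[OF hs[unfolded ef] has_vector_derivative_const])
    then show "(\<Delta> z t * Bd z + G z t * B z) $$ (i,j) = 0\<^sub>m K K $$ (i,j)"
      using ij mult_ent[OF dD[of z] dBd[of z] ij] mult_ent[OF dG[of z] dB[of z] ij] dD[of z] dBd[of z] dG[of z] dB[of z]
      by (simp add: sum.distrib)
  qed (use dD[of z] dBd[of z] dG[of z] dB[of z] in auto)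
  have BdE: "Bd z = - (B z * (G z t * B z))" for z
  proof -
    have "0\<^sub>m K K = B z * (\<Delta> z t * Bd z + G z t * B z)" using E0[of z] dB[of z] by simp
    also have "\<dots> = B z * (\<Delta> z t * Bd z) + B z * (G z t * B z)"
      using dB[of z] dD[of z] dBd[of z] dG[of z] by (intro mult_add_distrib_mat) auto
    also have "B z * (\<Delta> z t * Bd z) = Bd z"
      using dB[of z] dD[of z] dBd[of z] BD[of z] by (simp flip: assoc_mult_mat[of _ K K _ K _ K])
    finally have "Bd z + B z * (G z t * B z) = 0\<^sub>m K K" ..
    note S = this
    show ?thesis
    proof (rule eq_matI)
      fix i j assume "i < dim_row (- (B z * (G z t * B z)))" "j < dim_col (- (B z * (G z t * B z)))"
      then have ij: "i < K" "j < K" using dB[of z] by auto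
      have "(Bd z + B z * (G z t * B z)) $$ (i,j) = 0" using S ij by simp
      then have "Bd z $$ (i,j) + (B z * (G z t * B z)) $$ (i,j) = 0" using ij dBd[of z] dB[of z] dG[of z] by simp
      then show "Bd z $$ (i,j) = (- (B z * (G z t * B z))) $$ (i,j)" using ij dB[of z] dG[of z]
        by (simp add: eq_neg_iff_add_eq_0)
    qed (use dBd[of z] dB[of z] dG[of z] in auto)
  qed
  show "dInv x0 (\<lambda>x t. finv \<Delta> x t * (G x t * finv \<Delta> x t)) x t = minv C - finv \<Delta> x t"
  proof (rule eq_matI)
    have f: "finv \<Delta> y t = B y" for y unfolding finv_def B_def by simp
    have B0: "B x0 = minv C"
    proof -
      have "dInv x0 G x0 t = 0\<^sub>m K K" using dI[of x0] by (intro eq_matI) (auto simp: dInv_def carrier_matD(1,2)[OF dG])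
      then have "\<Delta> x0 t = C" unfolding \<Delta>_def using C by simp
      then show ?thesis unfolding B_def by simp
    qed
    have dims: "dim_row (dInv x0 (\<lambda>x t. finv \<Delta> x t * (G x t * finv \<Delta> x t)) x t) = K"
       "dim_col (dInv x0 (\<lambda>x t. finv \<Delta> x t * (G x t * finv \<Delta> x t)) x t) = K"
      using dB[of x] dG[of x] by (auto simp: dInv_def f)
    have dm: "minv C \<in> carrier_mat K K" using B0 dB[of x0] by simp
    show "dim_row (dInv x0 (\<lambda>x t. finv \<Delta> x t * (G x t * finv \<Delta> x t)) x t) = dim_row (minv C - finv \<Delta> x t)"
      "dim_col (dInv x0 (\<lambda>x t. finv \<Delta> x t * (G x t * finv \<Delta> x t)) x t) = dim_col (minv C - finv \<Delta> x t)"
      using dims dm dB[of x] by (auto simp: f)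
    fix i j assume "i < dim_row (minv C - finv \<Delta> x t)" "j < dim_col (minv C - finv \<Delta> x t)"
    then have ij: "i < K" "j < K" using dm dB[of x] by (auto simp: f)
    have hh: "((\<lambda>y. - B y $$ (i,j)) has_vector_derivative (B z * (G z t * B z)) $$ (i,j)) (at z)" for z
      using hB[OF ij, of z] BdE[of z] ij dB[of z] dG[of z] by (auto dest: has_vector_derivative_minus)
    have "dInv x0 (\<lambda>x t. finv \<Delta> x t * (G x t * finv \<Delta> x t)) x t $$ (i,j)
        = oint x0 x (\<lambda>s. (B s * (G s t * B s)) $$ (i,j))"
      using ij dB[of x] dG[of x] by (simp add: dInv_def f)
    also have "\<dots> = - B x $$ (i,j) - - B x0 $$ (i,j)" by (rule oint_ftc[OF hh])
    also have "\<dots> = (minv C - finv \<Delta> x t) $$ (i,j)" using ij dm dB[of x] B0 by (simp add: f)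
    finally show "dInv x0 (\<lambda>x t. finv \<Delta> x t * (G x t * finv \<Delta> x t)) x t $$ (i,j) = (minv C - finv \<Delta> x t) $$ (i,j)" .
  qed
qed


lemma has_dims_dInv: assumes "has_dims F r c" shows "has_dims (dInv x0 F) r c"
  unfolding has_dims_def dInv_def by (simp add: hd_row[OF assms] hd_col[OF assms])

lemma dInv_mtr: assumes "has_dims F r c" shows "dInv x0 (mtr F) = mtr (dInv x0 F)"
proof (intro ext eq_matI)
  fix x t i j
  assume "i < dim_row (mtr (dInv x0 F) x t)" "j < dim_col (mtr (dInv x0 F) x t)"
  then have ij: "i < c" "j < r" using hd_row[OF assms] hd_col[OF assms] by (auto simp: mtr_def dInv_def)
  show "dInv x0 (mtr F) x t $$ (i,j) = mtr (dInv x0 F) x t $$ (i,j)"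
    using ij hd_row[OF assms] hd_col[OF assms] by (simp add: mtr_def dInv_def)
qed (auto simp: mtr_def dInv_def)

lemma dInv_neg: assumes "has_dims F r c"
  shows "dInv x0 (\<lambda>x t. (-1) \<cdot>\<^sub>m F x t) = (\<lambda>x t. (-1) \<cdot>\<^sub>m dInv x0 F x t)"
proof (intro ext eq_matI)
  fix x t i j
  assume "i < dim_row ((-1) \<cdot>\<^sub>m dInv x0 F x t)" "j < dim_col ((-1) \<cdot>\<^sub>m dInv x0 F x t)"
  then have ij: "i < r" "j < c" using hd_row[OF assms] hd_col[OF assms] by (auto simp: dInv_def)
  have e: "(\<lambda>s. ((-1) \<cdot>\<^sub>m F s t) $$ (i,j)) = (\<lambda>s. - F s t $$ (i,j))"
    using ij hd_row[OF assms] hd_col[OF assms] by simp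
  show "dInv x0 (\<lambda>x t. (-1) \<cdot>\<^sub>m F x t) x t $$ (i,j) = ((-1) \<cdot>\<^sub>m dInv x0 F x t) $$ (i,j)"
    using ij hd_row[OF assms] hd_col[OF assms] by (simp add: dInv_def e oint_def)
qed (auto simp: dInv_def)

lemma mmul_cst_assoc: "has_dims F r c \<Longrightarrow> A \<in> carrier_mat c d \<Longrightarrow> B \<in> carrier_mat d e \<Longrightarrow>
   mmul (mmul F (cst A)) (cst B) = mmul F (cst (A * B))"
  unfolding has_dims_def mmul_def cst_def by (auto intro!: ext simp: assoc_mult_mat[of _ r c _ d _ e])

lemma alg1:
  fixes \<phi> B D C :: "complex mat"
  assumes "\<phi> \<in> carrier_mat N K" "B \<in> carrier_mat K K" "D \<in> carrier_mat K K" "C \<in> carrier_mat K K"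
    and BD: "B * D = 1\<^sub>m K"
  shows "1 \<cdot>\<^sub>m \<phi> + (-1) \<cdot>\<^sub>m ((\<phi> * B) * (D - C)) = (\<phi> * B) * C"
proof -
  have "(\<phi> * B) * (D - C) = (\<phi> * B) * D - (\<phi> * B) * C"
    using assms by (intro mult_minus_distrib_mat[where n=K]) auto
  also have "(\<phi> * B) * D = \<phi>" using assms by (simp add: assoc_mult_mat[of _ N K _ K _ K])
  finally have e: "(\<phi> * B) * (D - C) = \<phi> - (\<phi> * B) * C" .
  show ?thesis unfolding e using assms by (intro eq_matI) auto
qed

lemma alg2:
  fixes \<psi> B D C :: "complex mat"
  assumes "\<psi> \<in> carrier_mat N K" "B \<in> carrier_mat K K" "D \<in> carrier_mat K K" "C \<in> carrier_mat K K"
    and DB: "D * B = 1\<^sub>m K"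
  shows "1 \<cdot>\<^sub>m \<psi> + \<psi> * (transpose_mat B * ((-1) \<cdot>\<^sub>m transpose_mat (D - C))) = (\<psi> * transpose_mat B) * transpose_mat C"
proof -
  have t: "transpose_mat (D - C) = transpose_mat D - transpose_mat C" using assms by (simp add: transpose_minus)
  have "transpose_mat B * (transpose_mat D - transpose_mat C) = transpose_mat B * transpose_mat D - transpose_mat B * transpose_mat C"
    using assms by (intro mult_minus_distrib_mat[where n=K]) auto
  also have "transpose_mat B * transpose_mat D = 1\<^sub>m K"
    using assms transpose_mult[of D K K B K] by simp
  finally have e1: "transpose_mat B * transpose_mat (D - C) = 1\<^sub>m K - transpose_mat B * transpose_mat C" using t by simp
  have "transpose_mat B * ((-1) \<cdot>\<^sub>m transpose_mat (D - C)) = (-1) \<cdot>\<^sub>m (transpose_mat B * transpose_mat (D - C))"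
    using assms by (intro mult_smult_distrib[where n=K]) auto
  also have "\<dots> = (-1) \<cdot>\<^sub>m (1\<^sub>m K - transpose_mat B * transpose_mat C)" using e1 by simp
  finally have e2: "transpose_mat B * ((-1) \<cdot>\<^sub>m transpose_mat (D - C)) = (-1) \<cdot>\<^sub>m (1\<^sub>m K - transpose_mat B * transpose_mat C)" .
  have "\<psi> * ((-1) \<cdot>\<^sub>m (1\<^sub>m K - transpose_mat B * transpose_mat C)) = (-1) \<cdot>\<^sub>m (\<psi> * (1\<^sub>m K - transpose_mat B * transpose_mat C))"
    using assms by (intro mult_smult_distrib[where n=K]) auto
  also have "\<psi> * (1\<^sub>m K - transpose_mat B * transpose_mat C) = \<psi> - \<psi> * (transpose_mat B * transpose_mat C)"
    using assms by (subst mult_minus_distrib_mat[where n=K]) auto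
  also have "\<psi> * (transpose_mat B * transpose_mat C) = (\<psi> * transpose_mat B) * transpose_mat C"
    using assms by (simp add: assoc_mult_mat[of _ N K _ K _ K])
  finally have e3: "\<psi> * ((-1) \<cdot>\<^sub>m (1\<^sub>m K - transpose_mat B * transpose_mat C)) = (-1) \<cdot>\<^sub>m (\<psi> - (\<psi> * transpose_mat B) * transpose_mat C)" .
  show ?thesis unfolding e2 e3 using assms by (intro eq_matI) auto
qed

lemma alg3:
  fixes \<phi> B Ci :: "complex mat"
  assumes "\<phi> \<in> carrier_mat N K" "B \<in> carrier_mat K K" "Ci \<in> carrier_mat K K"
  shows "1 \<cdot>\<^sub>m (\<phi> * B) + \<phi> * (Ci - B) = \<phi> * Ci"
proof -
  have "\<phi> * (Ci - B) = \<phi> * Ci - \<phi> * B" using assms by (intro mult_minus_distrib_mat[where n=K]) auto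
  then show ?thesis using assms by (intro eq_matI) auto
qed

lemma alg4:
  fixes \<psi> B Ci :: "complex mat"
  assumes "\<psi> \<in> carrier_mat N K" "B \<in> carrier_mat K K" "Ci \<in> carrier_mat K K"
  shows "1 \<cdot>\<^sub>m (\<psi> * transpose_mat B) + \<psi> * ((-1) \<cdot>\<^sub>m ((-1) \<cdot>\<^sub>m transpose_mat (Ci - B))) = \<psi> * transpose_mat Ci"
proof -
  have "(-1) \<cdot>\<^sub>m ((-1) \<cdot>\<^sub>m transpose_mat (Ci - B)) = transpose_mat Ci - transpose_mat B"
    using assms by (intro eq_matI) auto
  moreover have "\<psi> * (transpose_mat Ci - transpose_mat B) = \<psi> * transpose_mat Ci - \<psi> * transpose_mat B"
    using assms by (intro mult_minus_distrib_mat[where n=K]) auto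
  ultimately show ?thesis using assms by (intro eq_matI) auto
qed

lemma alg5:
  fixes \<phi> \<psi> B :: "complex mat"
  assumes "\<phi> \<in> carrier_mat N K" "\<psi> \<in> carrier_mat N K" "B \<in> carrier_mat K K"
  shows "transpose_mat (\<phi> * B) * ((-1) \<cdot>\<^sub>m (\<psi> * transpose_mat B))
       = (-1) \<cdot>\<^sub>m transpose_mat (B * ((transpose_mat \<psi> * \<phi>) * B))"
proof -
  have "transpose_mat (B * ((transpose_mat \<psi> * \<phi>) * B)) = transpose_mat ((transpose_mat \<psi> * \<phi>) * B) * transpose_mat B"
    using assms by (intro transpose_mult[where n=K]) auto
  also have "transpose_mat ((transpose_mat \<psi> * \<phi>) * B) = transpose_mat B * transpose_mat (transpose_mat \<psi> * \<phi>)"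
    using assms by (intro transpose_mult[where n=K]) auto
  also have "transpose_mat (transpose_mat \<psi> * \<phi>) = transpose_mat \<phi> * \<psi>"
    using assms transpose_mult[of "transpose_mat \<psi>" K N \<phi> K] by simp
  finally have e1: "transpose_mat (B * ((transpose_mat \<psi> * \<phi>) * B)) = transpose_mat B * (transpose_mat \<phi> * \<psi>) * transpose_mat B" .
  have e2: "transpose_mat (\<phi> * B) = transpose_mat B * transpose_mat \<phi>"
    using assms by (intro transpose_mult[where n=K]) auto
  have "transpose_mat (\<phi> * B) * ((-1) \<cdot>\<^sub>m (\<psi> * transpose_mat B)) = (-1) \<cdot>\<^sub>m (transpose_mat (\<phi> * B) * (\<psi> * transpose_mat B))"
    using assms by (intro mult_smult_distrib[where n=N]) auto
  also have "transpose_mat (\<phi> * B) * (\<psi> * transpose_mat B) = transpose_mat B * (transpose_mat \<phi> * \<psi>) * transpose_mat B"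
    unfolding e2 using assms
    by (simp add: assoc_mult_mat[of _ K K _ N _ K] assoc_mult_mat[of _ K N _ K _ K] assoc_mult_mat[of _ K K _ K _ K])
  finally show ?thesis unfolding e1 .
qed

theorem corollary3:
  fixes N K m n :: nat and x0 :: real
    and \<alpha> \<gamma> :: complex and J M0 \<Lambda> \<Lambda>' C :: "complex mat"
    and v :: "nat \<Rightarrow> mfun" and q r \<phi> \<psi> :: mfun
  defines "M \<equiv> Mop n \<alpha> J v \<gamma> q M0 r"
  defines "\<Delta> \<equiv> (\<lambda>x t. C + dInv x0 (mmul (mtr \<psi>) \<phi>) x t)"
  defines "W \<equiv> Plus (Scal 1) (Comp (Scal (-1))
                 (Comp (Mul (mmul \<phi> (finv \<Delta>))) (Comp ODinv (Mul (mtr \<psi>)))))"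
  defines "Winv \<equiv> Plus (Scal 1) (Comp (Mul \<phi>) (Comp ODinv (Comp (Mul (finv \<Delta>)) (Mul (mtr \<psi>)))))"
  defines "Mhat \<equiv> Comp W (Comp M Winv)"
  defines "\<Phi> \<equiv> mmul \<phi> (finv \<Delta>)"
  defines "\<Psi> \<equiv> mmul \<psi> (mtr (finv \<Delta>))"
  assumes J: "J \<in> carrier_mat N N" and M0: "M0 \<in> carrier_mat m m"
    and v: "\<And>i. i < n \<Longrightarrow> has_dims (v i) N N \<and> smooth_mfun (v i)"
    and q: "has_dims q N m" "smooth_mfun q"
    and r: "has_dims r N m" "smooth_mfun r"
    and phi: "has_dims \<phi> N K" "smooth_mfun \<phi>"
    and psi: "has_dims \<psi> N K" "smooth_mfun \<psi>"
    and Lam: "\<Lambda> \<in> carrier_mat K K" "\<Lambda>' \<in> carrier_mat K K"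
    and C: "C \<in> carrier_mat K K" "det C \<noteq> 0"
    and Delta_inv: "\<And>x t. det (\<Delta> x t) \<noteq> 0"
    and eq_phi: "act x0 M \<phi> = mmul \<phi> (cst \<Lambda>)"
    and eq_psi: "act x0 (otr M) \<psi> = mmul \<psi> (cst \<Lambda>')"
  shows "\<Phi> = mmul (act x0 W \<phi>) (cst (minv C))
    \<and> \<Psi> = mmul (act x0 (otr Winv) \<psi>) (cst (minv (transpose_mat C)))
    \<and> act x0 Mhat \<Phi> = mmul \<Phi> (cst (C * \<Lambda> * minv C))
    \<and> act x0 (otr Mhat) \<Psi> = mmul \<Psi> (cst (transpose_mat C * \<Lambda>' * minv (transpose_mat C)))"
proof -
  have sphi: "sm N K \<phi>" using smooth_mfun_sm[OF phi(2,1)] .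
  have spsi: "sm N K \<psi>" using smooth_mfun_sm[OF psi(2,1)] .
  have sq: "sm N m q" using smooth_mfun_sm[OF q(2,1)] .
  have sr: "sm N m r" using smooth_mfun_sm[OF r(2,1)] .
  have sv: "\<And>i. i < n \<Longrightarrow> sm N N (v i)" using v smooth_mfun_sm by blast
  define G where "G = mmul (mtr \<psi>) \<phi>"
  have sG: "sm K K G" unfolding G_def by (rule sm_mmul[OF sm_mtr[OF spsi] sphi])
  have dG: "\<And>x t. G x t \<in> carrier_mat K K" using sm_dims[OF sG] unfolding has_dims_def by blast
  have dphi: "\<And>x t. \<phi> x t \<in> carrier_mat N K" using phi(1) unfolding has_dims_def by blast
  have dpsi: "\<And>x t. \<psi> x t \<in> carrier_mat N K" using psi(1) unfolding has_dims_def by blast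
  have DeltaG: "\<Delta> = (\<lambda>x t. C + dInv x0 G x t)" unfolding \<Delta>_def G_def ..
  have dI: "\<And>x t. dInv x0 G x t \<in> carrier_mat K K"
    using has_dims_dInv[OF sm_dims[OF sG]] unfolding has_dims_def by blast
  have dD: "\<And>x t. \<Delta> x t \<in> carrier_mat K K" unfolding DeltaG using C(1) dI by auto
  define B where "B = finv \<Delta>"
  have Bx: "\<And>x t. B x t = minv (\<Delta> x t)" unfolding B_def finv_def by simp
  have dB: "\<And>x t. B x t \<in> carrier_mat K K" and DB: "\<And>x t. \<Delta> x t * B x t = 1\<^sub>m K"
    and BD: "\<And>x t. B x t * \<Delta> x t = 1\<^sub>m K"
    unfolding Bx using minv_props[OF dD Delta_inv] by auto
  have dIG: "\<And>x t. dInv x0 G x t = \<Delta> x t - C"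
    unfolding DeltaG using C(1) dI by (intro eq_matI) (auto simp: carrier_matD[OF dI] carrier_matD[OF C(1)])
  have KEY: "dInv x0 (\<lambda>x t. B x t * (G x t * B x t)) = (\<lambda>x t. minv C - B x t)"
    unfolding B_def DeltaG by (rule key[OF sG C(1)]) (use Delta_inv in \<open>simp add: DeltaG\<close>)
  note Cm = minv_props[OF C]
  have CT: "transpose_mat C \<in> carrier_mat K K" "det (transpose_mat C) \<noteq> 0"
    using C det_transpose[OF C(1)] by auto
  note CTm = minv_props[OF CT]
  have CTinv: "minv (transpose_mat C) = transpose_mat (minv C)"
  proof -
    have a: "transpose_mat C * transpose_mat (minv C) = 1\<^sub>m K"
      using transpose_mult[of "minv C" K K C K] Cm C(1) by simp
    have "minv (transpose_mat C) = minv (transpose_mat C) * (transpose_mat C * transpose_mat (minv C))"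
      using a CTm by simp
    also have "\<dots> = (minv (transpose_mat C) * transpose_mat C) * transpose_mat (minv C)"
      by (rule assoc_mult_mat[symmetric]) (use CTm Cm CT in auto)
    finally show ?thesis using CTm Cm by simp
  qed
  have hPhi: "has_dims \<Phi> N K" unfolding \<Phi>_def B_def[symmetric] using dphi dB
    by (auto simp: has_dims_def mmul_def intro!: mult_carrier_mat[of _ N K _ K])
  have hPsi: "has_dims \<Psi> N K" unfolding \<Psi>_def B_def[symmetric] using dpsi dB
    by (auto simp: has_dims_def mmul_def mtr_def intro!: mult_carrier_mat[of _ N K _ K])
  have Wphi: "act x0 W \<phi> = mmul \<Phi> (cst C)"
  proof (intro ext)
    fix x t
    have "act x0 W \<phi> x t = 1 \<cdot>\<^sub>m \<phi> x t + (-1) \<cdot>\<^sub>m ((\<phi> x t * B x t) * (\<Delta> x t - C))"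
      unfolding W_def using dIG[unfolded G_def mmul_def] by (simp add: mmul_def B_def[symmetric])
    also have "\<dots> = (\<phi> x t * B x t) * C" by (rule alg1[OF dphi dB dD C(1) BD])
    finally show "act x0 W \<phi> x t = mmul \<Phi> (cst C) x t" by (simp add: \<Phi>_def mmul_def cst_def B_def)
  qed
  have c1: "\<Phi> = mmul (act x0 W \<phi>) (cst (minv C))"
    unfolding Wphi using mmul_cst_assoc[OF hPhi C(1) Cm(1)] Cm(2)
    using hPhi by (auto intro!: ext simp: mmul_def cst_def has_dims_def right_mult_one_mat[of _ N K])
  have Winvpsi: "act x0 (otr Winv) \<psi> = mmul \<Psi> (cst (transpose_mat C))"
  proof (intro ext)
    fix x t
    have e: "dInv x0 (mmul (mtr \<phi>) \<psi>) x t = transpose_mat (\<Delta> x t - C)"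
    proof -
      have "mmul (mtr \<phi>) \<psi> = mtr G"
        unfolding G_def mtr_def mmul_def using dphi dpsi
        by (auto intro!: ext simp: transpose_mult[of _ K N _ K])
      then show ?thesis using dInv_mtr[OF sm_dims[OF sG]] dIG by (simp add: mtr_def)
    qed
    have "act x0 (otr Winv) \<psi> x t = 1 \<cdot>\<^sub>m \<psi> x t + \<psi> x t * (transpose_mat (B x t) * ((-1) \<cdot>\<^sub>m transpose_mat (\<Delta> x t - C)))"
      unfolding Winv_def using e[unfolded mmul_def mtr_def] by (simp add: mmul_def B_def[symmetric] mtr_def)
    also have "\<dots> = (\<psi> x t * transpose_mat (B x t)) * transpose_mat C" by (rule alg2[OF dpsi dB dD C(1) DB])
    finally show "act x0 (otr Winv) \<psi> x t = mmul \<Psi> (cst (transpose_mat C)) x t"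
      by (simp add: \<Psi>_def mmul_def cst_def B_def mtr_def)
  qed
  have c2: "\<Psi> = mmul (act x0 (otr Winv) \<psi>) (cst (minv (transpose_mat C)))"
    unfolding Winvpsi using mmul_cst_assoc[OF hPsi CT(1) CTm(1)] CTm(2)
    using hPsi by (auto intro!: ext simp: mmul_def cst_def has_dims_def right_mult_one_mat[of _ N K])
  have WinvPhi: "act x0 Winv \<Phi> = mmul \<phi> (cst (minv C))"
  proof -
    have e: "mmul (finv \<Delta>) (mmul (mtr \<psi>) \<Phi>) = (\<lambda>x t. B x t * (G x t * B x t))"
      unfolding \<Phi>_def B_def[symmetric] G_def using dphi dpsi dB
      by (auto intro!: ext simp: mmul_def mtr_def assoc_mult_mat[of _ K N _ K _ K])
    show ?thesis
    proof (intro ext)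
      fix x t
      have "act x0 Winv \<Phi> x t = 1 \<cdot>\<^sub>m (\<phi> x t * B x t) + \<phi> x t * (minv C - B x t)"
        unfolding Winv_def by (simp add: e KEY) (simp add: mmul_def \<Phi>_def B_def)
      also have "\<dots> = \<phi> x t * minv C" by (rule alg3[OF dphi dB Cm(1)])
      finally show "act x0 Winv \<Phi> x t = mmul \<phi> (cst (minv C)) x t" by (simp add: mmul_def cst_def)
    qed
  qed
  have gM: "gop x0 M N N" unfolding M_def by (rule gop_M[OF J M0 sv sq sr])
  have gW: "gop x0 W N N" unfolding W_def by (rule gop_W[OF hPhi[unfolded \<Phi>_def] spsi])
  have c3: "act x0 Mhat \<Phi> = mmul \<Phi> (cst (C * \<Lambda> * minv C))"
  proof -
    have "act x0 Mhat \<Phi> = act x0 W (act x0 M (mmul \<phi> (cst (minv C))))"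
      unfolding Mhat_def by (simp add: WinvPhi)
    also have "act x0 M (mmul \<phi> (cst (minv C))) = mmul (mmul \<phi> (cst \<Lambda>)) (cst (minv C))"
    proof -
      have "rlin x0 M \<phi> K" using gM sphi unfolding gop_def by blast
      then show ?thesis using Cm(1) eq_phi unfolding rlin_def by metis
    qed
    also have "\<dots> = mmul \<phi> (cst (\<Lambda> * minv C))" using mmul_cst_assoc[OF phi(1) Lam(1) Cm(1)] .
    also have "act x0 W \<dots> = mmul (act x0 W \<phi>) (cst (\<Lambda> * minv C))"
    proof -
      have "rlin x0 W \<phi> K" using gW sphi unfolding gop_def by blast
      then show ?thesis using mult_carrier_mat[OF Lam(1) Cm(1)] unfolding rlin_def by metis
    qed
    also have "\<dots> = mmul \<Phi> (cst (C * (\<Lambda> * minv C)))"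
      unfolding Wphi by (rule mmul_cst_assoc[OF hPhi C(1) mult_carrier_mat[OF Lam(1) Cm(1)]])
    also have "C * (\<Lambda> * minv C) = C * \<Lambda> * minv C" using C(1) Lam(1) Cm(1) by simp
    finally show ?thesis .
  qed
  have otrWPsi: "act x0 (otr W) \<Psi> = mmul \<psi> (cst (minv (transpose_mat C)))"
  proof -
    have e1: "mmul (mtr \<Phi>) (\<lambda>x t. (-1) \<cdot>\<^sub>m \<Psi> x t) = (\<lambda>x t. (-1) \<cdot>\<^sub>m mtr (\<lambda>x t. B x t * (G x t * B x t)) x t)"
      unfolding \<Phi>_def \<Psi>_def B_def[symmetric] G_def
      by (auto intro!: ext simp: mmul_def mtr_def alg5[OF dphi dpsi dB])
    have hBGB0: "has_dims (\<lambda>x t. B x t * (G x t * B x t)) K K"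
      using dB dG by (auto simp: has_dims_def intro!: mult_carrier_mat[of _ K K _ K])
    have hBGB: "has_dims (mtr (\<lambda>x t. B x t * (G x t * B x t))) K K" by (rule has_dims_mtr[OF hBGB0])
    have e2: "dInv x0 (mmul (mtr \<Phi>) (\<lambda>x t. (-1) \<cdot>\<^sub>m \<Psi> x t)) = (\<lambda>x t. (-1) \<cdot>\<^sub>m transpose_mat (minv C - B x t))"
      unfolding e1 dInv_neg[OF hBGB] dInv_mtr[OF hBGB0] KEY by (simp add: mtr_def)
    show ?thesis
    proof (intro ext)
      fix x t
      have "act x0 (otr W) \<Psi> x t = 1 \<cdot>\<^sub>m (\<psi> x t * transpose_mat (B x t)) + \<psi> x t * ((-1) \<cdot>\<^sub>m ((-1) \<cdot>\<^sub>m transpose_mat (minv C - B x t)))"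
        unfolding W_def by (simp add: e2[unfolded \<Phi>_def]) (simp add: mmul_def mtr_def \<Psi>_def B_def)
      also have "\<dots> = \<psi> x t * transpose_mat (minv C)" by (rule alg4[OF dpsi dB Cm(1)])
      finally show "act x0 (otr W) \<Psi> x t = mmul \<psi> (cst (minv (transpose_mat C))) x t"
        by (simp add: mmul_def cst_def CTinv)
    qed
  qed
  have gMt: "gop x0 (otr M) N N" unfolding M_def by (rule gop_otr_M[OF J M0 sv sq sr])
  have hB: "has_dims (finv \<Delta>) K K" using dB unfolding B_def has_dims_def by blast
  have gWt: "gop x0 (otr Winv) N N" unfolding Winv_def by (rule gop_otr_Winv[OF sphi psi(1) hB])
  have c4: "act x0 (otr Mhat) \<Psi> = mmul \<Psi> (cst (transpose_mat C * \<Lambda>' * minv (transpose_mat C)))"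
  proof -
    have "act x0 (otr Mhat) \<Psi> = act x0 (otr Winv) (act x0 (otr M) (mmul \<psi> (cst (minv (transpose_mat C)))))"
      unfolding Mhat_def by (simp add: otrWPsi)
    also have "act x0 (otr M) (mmul \<psi> (cst (minv (transpose_mat C)))) = mmul (mmul \<psi> (cst \<Lambda>')) (cst (minv (transpose_mat C)))"
    proof -
      have "rlin x0 (otr M) \<psi> K" using gMt spsi unfolding gop_def by blast
      then show ?thesis using CTm(1) eq_psi unfolding rlin_def by metis
    qed
    also have "\<dots> = mmul \<psi> (cst (\<Lambda>' * minv (transpose_mat C)))" using mmul_cst_assoc[OF psi(1) Lam(2) CTm(1)] .
    also have "act x0 (otr Winv) \<dots> = mmul (act x0 (otr Winv) \<psi>) (cst (\<Lambda>' * minv (transpose_mat C)))"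
    proof -
      have "rlin x0 (otr Winv) \<psi> K" using gWt spsi unfolding gop_def by blast
      then show ?thesis using mult_carrier_mat[OF Lam(2) CTm(1)] unfolding rlin_def by metis
    qed
    also have "\<dots> = mmul \<Psi> (cst (transpose_mat C * (\<Lambda>' * minv (transpose_mat C))))"
      unfolding Winvpsi by (rule mmul_cst_assoc[OF hPsi CT(1) mult_carrier_mat[OF Lam(2) CTm(1)]])
    also have "transpose_mat C * (\<Lambda>' * minv (transpose_mat C)) = transpose_mat C * \<Lambda>' * minv (transpose_mat C)"
      using CT(1) Lam(2) CTm(1) by simp
    finally show ?thesis .
  qed
  show ?thesis using c1 c2 c3 c4 by blast
qed

end
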